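(* For every finite graph $G$, \[\mathrm{VCdim}(G)\le 8\,\mathrm{fw}_1(G)\quad\text{and}\quad \mathrm{2VCdim}(G)\le 8\,\mathrm{fw}_2(G)+2.\]
   Context: Graphs are finite, simple, undirected; $N(v)$ is the (open) neighbourhood of $v$. $\mathrm{VCdim}(G)$ is the largest size of a set $X\subseteq V(G)$ with $\{N(v)\cap X: v\in V(G)\}=2^X$. $\mathrm{2VCdim}(G)$ is the largest size of a set $X\subseteq V(G)$ such that for every two distinct $a,b\in X$ there is $c\in V(G)$ with $N(c)\cap X=\{a,b\}$. A $k$-flip of $G$ is a graph obtained by choosing a partition $\mathcal P$ of $V(G)$ with at most $k$ parts and, for some pairs $A,B$ of (possibly equal) parts, inverting the adjacency of every pair of distinct vertices $x\in A$, $y\in B$. Flipper game of radius $r$ and width $k$: $G_0=G$, runner chooses $v_0$; in round $i\ge1$ the flipper announces a $k$-flip $G_i$ of $G$, then the runner moves from $v_{i-1}$ to $v_i$ along a path of length at most $r$ in $G_{i-1}$; the flipper wins if $v_i$ is isolated in $G_i$. $\mathrm{fw}_r(G)$ is the least $k$ for which the flipper has a winning strategy. *)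

theory Defs
  imports Main
begin

definition finite_graph :: "'a set \<Rightarrow> ('a \<Rightarrow> 'a \<Rightarrow> bool) \<Rightarrow> bool" where
  "finite_graph V E \<longleftrightarrow> finite V \<and>
     (\<forall>x y. E x y \<longrightarrow> x \<in> V \<and> y \<in> V \<and> x \<noteq> y) \<and>
     (\<forall>x y. E x y \<longrightarrow> E y x)"

definition nbhd :: "'a set \<Rightarrow> ('a \<Rightarrow> 'a \<Rightarrow> bool) \<Rightarrow> 'a \<Rightarrow> 'a set" where
  "nbhd V E v = {u \<in> V. E v u}"

definition shattered :: "'a set \<Rightarrow> ('a \<Rightarrow> 'a \<Rightarrow> bool) \<Rightarrow> 'a set \<Rightarrow> bool" where
  "shattered V E X \<longleftrightarrow> X \<subseteq> V \<and> {nbhd V E v \<inter> X | v. v \<in> V} = Pow X"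

text \<open>Largest size of a shattered set (Sup of the empty set of naturals is 0).\<close>
definition VCdim :: "'a set \<Rightarrow> ('a \<Rightarrow> 'a \<Rightarrow> bool) \<Rightarrow> nat" where
  "VCdim V E = Sup {card X | X. shattered V E X}"

definition two_shattered :: "'a set \<Rightarrow> ('a \<Rightarrow> 'a \<Rightarrow> bool) \<Rightarrow> 'a set \<Rightarrow> bool" where
  "two_shattered V E X \<longleftrightarrow> X \<subseteq> V \<and>
     (\<forall>a\<in>X. \<forall>b\<in>X. a \<noteq> b \<longrightarrow> (\<exists>c\<in>V. nbhd V E c \<inter> X = {a, b}))"

definition twoVCdim :: "'a set \<Rightarrow> ('a \<Rightarrow> 'a \<Rightarrow> bool) \<Rightarrow> nat" where
  "twoVCdim V E = Sup {card X | X. two_shattered V E X}"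

text \<open>Flip of (V,E) w.r.t. a labelling p of the vertices (the parts of the partition
are the label classes) and a symmetric relation F on labels (the chosen pairs of parts).\<close>
definition flip_graph :: "'a set \<Rightarrow> ('a \<Rightarrow> 'a \<Rightarrow> bool) \<Rightarrow> ('a \<Rightarrow> nat) \<Rightarrow> (nat \<Rightarrow> nat \<Rightarrow> bool)
    \<Rightarrow> 'a \<Rightarrow> 'a \<Rightarrow> bool" where
  "flip_graph V E p F x y \<longleftrightarrow> x \<in> V \<and> y \<in> V \<and> x \<noteq> y \<and> (E x y \<noteq> F (p x) (p y))"

definition is_k_flip :: "'a set \<Rightarrow> ('a \<Rightarrow> 'a \<Rightarrow> bool) \<Rightarrow> nat \<Rightarrow> ('a \<Rightarrow> 'a \<Rightarrow> bool) \<Rightarrow> bool" where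
  "is_k_flip V E k H \<longleftrightarrow> (\<exists>p F. (\<forall>v\<in>V. p v < k) \<and> (\<forall>i j. F i j \<longrightarrow> F j i) \<and>
      H = flip_graph V E p F)"

definition within_dist :: "('a \<Rightarrow> 'a \<Rightarrow> bool) \<Rightarrow> nat \<Rightarrow> 'a \<Rightarrow> 'a \<Rightarrow> bool" where
  "within_dist H r v w \<longleftrightarrow> (\<exists>m f. m \<le> r \<and> f 0 = v \<and> f m = w \<and> (\<forall>j<m. H (f j) (f (Suc j))))"

definition isolated :: "('a \<Rightarrow> 'a \<Rightarrow> bool) \<Rightarrow> 'a \<Rightarrow> bool" where
  "isolated H v \<longleftrightarrow> (\<forall>u. \<not> H v u)"

text \<open>Winning region of the flipper in the flipper game of radius r and width k on (V,E):
the position (H, v) means that the previous graph G_(i-1) is H and the runner sits at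
v = v_(i-1). This is the least fixed point
(attractor), i.e. the set of positions from which the flipper has a winning strategy.\<close>
inductive flipper_wins_from :: "'a set \<Rightarrow> ('a \<Rightarrow> 'a \<Rightarrow> bool) \<Rightarrow> nat \<Rightarrow> nat
    \<Rightarrow> ('a \<Rightarrow> 'a \<Rightarrow> bool) \<Rightarrow> 'a \<Rightarrow> bool"
  for V E r k where
  step: "is_k_flip V E k H' \<Longrightarrow>
     (\<forall>w. within_dist H r v w \<longrightarrow> isolated H' w \<or> flipper_wins_from V E r k H' w) \<Longrightarrow>
     flipper_wins_from V E r k H v"

definition flipper_wins :: "'a set \<Rightarrow> ('a \<Rightarrow> 'a \<Rightarrow> bool) \<Rightarrow> nat \<Rightarrow> nat \<Rightarrow> bool" where
  "flipper_wins V E r k \<longleftrightarrow> (\<forall>v0\<in>V. flipper_wins_from V E r k E v0)"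

definition fw :: "nat \<Rightarrow> 'a set \<Rightarrow> ('a \<Rightarrow> 'a \<Rightarrow> bool) \<Rightarrow> nat" where
  "fw r V E = (LEAST k. flipper_wins V E r k)"

end

theory Submission
  imports Defs
begin



lemma Sup_nat_le: "(\<And>y. y \<in> S \<Longrightarrow> y \<le> (b::nat)) \<Longrightarrow> Sup S \<le> b"
  by (cases "S = {}") (auto intro: cSup_least)

lemma runner_wins:
  assumes inv: "\<And>H v H'. P H v \<Longrightarrow> is_k_flip V E k H' \<Longrightarrow>
     \<exists>w. within_dist H r v w \<and> \<not> isolated H' w \<and> P H' w"
  shows "flipper_wins_from V E r k H v \<Longrightarrow> \<not> P H v"
proof (induction rule: flipper_wins_from.induct)
  case (step H' H v)
  show ?case
  proof
    assume "P H v"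
    from inv[OF this step(1)] obtain w where "within_dist H r v w" "\<not> isolated H' w" "P H' w" by blast
    with step(2) show False by blast
  qed
qed

lemma flipper_wins_exists:
  assumes g: "finite_graph V E"
  shows "flipper_wins V E r (card V)"
proof -
  from g have fin: "finite V" and sym: "\<And>x y. E x y \<Longrightarrow> E y x"
    unfolding finite_graph_def by auto
  obtain p where bp: "bij_betw p V {0..<card V}" using ex_bij_betw_finite_nat[OF fin] by blast
  define F where "F i j = (\<exists>x\<in>V. \<exists>y\<in>V. p x = i \<and> p y = j \<and> E x y)" for i j
  have inj: "inj_on p V" using bp bij_betw_def by blast
  have pk: "\<forall>v\<in>V. p v < card V" using bp unfolding bij_betw_def by auto
  have Fs: "\<forall>i j. F i j \<longrightarrow> F j i" unfolding F_def using sym by blast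
  have kf: "is_k_flip V E (card V) (flip_graph V E p F)"
    unfolding is_k_flip_def using pk Fs by blast
  have iso: "isolated (flip_graph V E p F) w" for w
    unfolding isolated_def flip_graph_def F_def using inj by (auto dest: inj_onD)
  show ?thesis unfolding flipper_wins_def
    using flipper_wins_from.step[OF kf] iso by blast
qed

lemma fw_wins:
  assumes "finite_graph V E"
  shows "flipper_wins V E r (fw r V E)"
  unfolding fw_def using flipper_wins_exists[OF assms] by (rule LeastI)




lemma dist0: "within_dist H r a a"
  unfolding within_dist_def by (rule exI[of _ 0]) auto

lemma dist1: "H a b \<Longrightarrow> 1 \<le> r \<Longrightarrow> within_dist H r a b"
  unfolding within_dist_def
  by (rule exI[of _ 1], rule exI[of _ "\<lambda>i. if i = 0 then a else b"]) auto

lemma path2: "H a b \<Longrightarrow> H b c \<Longrightarrow> within_dist H 2 a c"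
  unfolding within_dist_def
  apply (rule exI[of _ 2], rule exI[of _ "\<lambda>i. if i = 0 then a else if i = 1 then b else c"])
  by (auto simp: less_2_cases_iff)

lemma dist_nonisolated: "within_dist H r a b \<Longrightarrow> a \<noteq> b \<Longrightarrow> \<not> isolated H a"
proof -
  assume "within_dist H r a b" "a \<noteq> b"
  then obtain m f where mf: "f 0 = a" "f m = b" "\<forall>j<m. H (f j) (f (Suc j))"
    unfolding within_dist_def by blast
  have "m \<noteq> 0"
  proof
    assume "m = 0"
    with mf \<open>a \<noteq> b\<close> show False by simp
  qed
  then have "H (f 0) (f (Suc 0))" using mf(3) by auto
  then show ?thesis unfolding isolated_def using mf(1) by auto
qed

lemma not_inj_pigeon:
  assumes "finite A" "k < card A" "\<forall>x\<in>A. (p::'a\<Rightarrow>nat) x < k"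
  shows "\<exists>x1\<in>A. \<exists>x2\<in>A. x1 \<noteq> x2 \<and> p x1 = p x2"
proof (rule ccontr)
  assume "\<not> ?thesis"
  then have "inj_on p A" unfolding inj_on_def by blast
  moreover have "p ` A \<subseteq> {..<k}" using assms(3) by auto
  ultimately have "card A \<le> card {..<k}" by (intro card_inj_on_le) auto
  with assms(2) show False by simp
qed

locale gctx =
  fixes V :: "'a set" and E :: "'a \<Rightarrow> 'a \<Rightarrow> bool"
  assumes g: "finite_graph V E"
begin

lemma finV: "finite V" using g unfolding finite_graph_def by auto
lemma symE: "E x y \<Longrightarrow> E y x" using g unfolding finite_graph_def by auto
lemma irrE: "E x y \<Longrightarrow> x \<noteq> y" using g unfolding finite_graph_def by auto
lemma inVE: "E x y \<Longrightarrow> x \<in> V \<and> y \<in> V" using g unfolding finite_graph_def by auto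

end

locale two_ctx = gctx +
  fixes X :: "'a set" and k :: nat
  assumes ts: "two_shattered V E X"
begin

lemma XV: "X \<subseteq> V" using ts unfolding two_shattered_def by auto
lemma finX: "finite X" using XV finV finite_subset by auto

lemma wit: "a \<in> X \<Longrightarrow> b \<in> X \<Longrightarrow> a \<noteq> b \<Longrightarrow> \<exists>c\<in>V. nbhd V E c \<inter> X = {a, b}"
  using ts unfolding two_shattered_def by auto

definition R :: "('a \<Rightarrow> 'a \<Rightarrow> bool) \<Rightarrow> 'a \<Rightarrow> 'a set" where
  "R H v = {y \<in> X. within_dist H 2 v y}"

lemma finR: "finite (R H v)" unfolding R_def using finX by auto

lemma Kbound:
  fixes p :: "'a \<Rightarrow> nat" and F
  defines "H' \<equiv> flip_graph V E p F"
  assumes y1: "y1 \<in> X" and y2: "y2 \<in> X" and ne: "y1 \<noteq> y2" and pe: "p y1 = p y2"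
  defines "Reach \<equiv> R H' y1 \<union> R H' y2"
  shows "card ({x\<in>X. p x = c} - Reach) \<le> 3"
proof -
  define B where "B = {z\<in>X. z \<noteq> y1 \<and> nbhd V E y2 \<inter> X = {y1, z}}"
  have fB: "finite B" unfolding B_def using finX by auto
  have "\<forall>a\<in>B. \<forall>b\<in>B. a = b" unfolding B_def by (auto simp: doubleton_eq_iff)
  then have cB: "card B \<le> 1" using card_le_Suc0_iff_eq[OF fB] by simp
  have y1R: "y1 \<in> Reach" unfolding Reach_def R_def using y1 dist0[of H' 2 y1] by auto
  have y2R: "y2 \<in> Reach" unfolding Reach_def R_def using y2 dist0[of H' 2 y2] by auto
  have main: "card ({x\<in>X. p x = c} - Reach - B) \<le> 2"
  proof (cases "{x\<in>X. p x = c} - Reach - B = {}")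
    case True show ?thesis unfolding True by simp
  next
    case False
    then obtain z where z: "z \<in> X" "p z = c" "z \<notin> Reach" "z \<notin> B" by auto
    have zy1: "z \<noteq> y1" using z y1R by auto
    obtain w where w: "w \<in> V" "nbhd V E w \<inter> X = {y1, z}" using wit[OF y1 z(1) zy1[symmetric]] by auto
    have Ewx: "x \<in> X \<Longrightarrow> E w x \<longleftrightarrow> x = y1 \<or> x = z" for x
      using w XV unfolding nbhd_def by blast
    have Ewy1: "E w y1" "E w z" using Ewx y1 z(1) by auto
    have wy1: "w \<noteq> y1" "w \<noteq> z" using irrE Ewy1 by auto
    have wy2: "w \<noteq> y2"
    proof
      assume "w = y2"
      then have "z \<in> B" unfolding B_def using z(1) zy1 w(2) by auto
      with z show False by simp
    qed
    have nEy2: "\<not> E w y2" using Ewx[OF y2] ne zy1 y2R z(3) by auto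
    have y1V: "y1 \<in> V" "y2 \<in> V" "z \<in> V" using y1 y2 z XV by auto
    have Ey1w: "E y1 w" using symE Ewy1 by auto
    have nEy2w: "\<not> E y2 w" using symE nEy2 by auto
    have owner: "\<exists>ow\<in>{y1,y2}. H' ow w"
    proof (cases "F (p y1) (p w)")
      case True
      then have "H' y2 w" unfolding H'_def flip_graph_def using y1V w(1) wy2 nEy2w pe by auto
      then show ?thesis by auto
    next
      case False
      then have "H' y1 w" unfolding H'_def flip_graph_def using y1V w(1) wy1 Ey1w by auto
      then show ?thesis by auto
    qed
    then obtain ow where o: "ow \<in> {y1,y2}" "H' ow w" by blast
    have reach: "x \<in> X \<Longrightarrow> H' w x \<Longrightarrow> x \<in> Reach" for x
      using path2[of H' ow w x, OF o(2)] o(1) unfolding Reach_def R_def by auto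
    have nwz: "\<not> H' w z" using reach z(1,3) by blast
    have Fz: "F (p w) (p z)"
      using nwz Ewy1 y1V w(1) wy1 unfolding H'_def flip_graph_def by auto
    have "{x\<in>X. p x = c} - Reach - B \<subseteq> {z, w}"
    proof
      fix x assume x: "x \<in> {x\<in>X. p x = c} - Reach - B"
      show "x \<in> {z, w}"
      proof (rule ccontr)
        assume xzw: "x \<notin> {z, w}"
        have "x \<noteq> y1" using x y1R by auto
        then have "\<not> E w x" using Ewx x xzw by auto
        moreover have "x \<in> V" using x XV by auto
        ultimately have "H' w x" unfolding H'_def flip_graph_def
          using w(1) xzw Fz x z(2) by auto
        then show False using reach x by auto
      qed
    qed
    then have "card ({x\<in>X. p x = c} - Reach - B) \<le> card {z, w}" by (rule card_mono[rotated]) auto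
    also have "\<dots> \<le> 2" by (simp add: card_insert_le_m1)
    finally show ?thesis .
  qed
  have "{x\<in>X. p x = c} - Reach \<subseteq> ({x\<in>X. p x = c} - Reach - B) \<union> B" by auto
  then have "card ({x\<in>X. p x = c} - Reach) \<le> card (({x\<in>X. p x = c} - Reach - B) \<union> B)"
    by (rule card_mono[rotated]) (auto simp: B_def finX)
  also have "\<dots> \<le> card ({x\<in>X. p x = c} - Reach - B) + card B" by (rule card_Un_le)
  finally show ?thesis using main cB by linarith
qed

lemma key2:
  fixes p :: "'a \<Rightarrow> nat" and F
  defines "H' \<equiv> flip_graph V E p F"
  assumes pk: "\<forall>v\<in>V. p v < k"
  assumes y1: "y1 \<in> X" and y2: "y2 \<in> X" and ne: "y1 \<noteq> y2" and pe: "p y1 = p y2"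
  assumes big: "5 * k + 1 \<le> card X"
  shows "k + 1 \<le> card (R H' y1) \<or> k + 1 \<le> card (R H' y2)"
proof (rule ccontr)
  assume "\<not> ?thesis"
  then have c1: "card (R H' y1) \<le> k" "card (R H' y2) \<le> k" by auto
  define Reach where "Reach = R H' y1 \<union> R H' y2"
  have cR: "card Reach \<le> 2 * k" unfolding Reach_def using card_Un_le[of "R H' y1" "R H' y2"] c1 by linarith
  define Q where "Q = (\<Union>c<k. {x\<in>X. p x = c} - Reach)"
  have sub: "X \<subseteq> Reach \<union> Q"
  proof
    fix x assume x: "x \<in> X"
    have "p x < k" using pk XV x by auto
    then show "x \<in> Reach \<union> Q" unfolding Q_def using x by blast
  qed
  have fRQ: "finite (Reach \<union> Q)" unfolding Reach_def Q_def using finR finX by auto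
  have "card X \<le> card (Reach \<union> Q)" using card_mono[OF fRQ sub] .
  also have "\<dots> \<le> card Reach + card Q" by (rule card_Un_le)
  also have "card Q \<le> (\<Sum>c<k. card ({x\<in>X. p x = c} - Reach))"
    unfolding Q_def by (rule card_UN_le) simp
  also have "\<dots> \<le> (\<Sum>c<k. 3)"
  proof (rule sum_mono)
    fix c show "card ({x\<in>X. p x = c} - Reach) \<le> 3"
      using Kbound[OF y1 y2 ne pe, where F=F and c=c] unfolding H'_def Reach_def .
  qed
  also have "(\<Sum>c<k. (3::nat)) = 3 * k" by simp
  finally have "card X \<le> card Reach + 3 * k" by simp
  with cR big show False by linarith
qed

lemma runner2:
  assumes big: "5 * k + 1 \<le> card X" and ne: "X \<noteq> {}"
  shows "\<not> flipper_wins V E 2 k"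
proof -
  define P where "P H v = (k + 1 \<le> card (R H v))" for H v
  have stp: "\<exists>w. within_dist H 2 v w \<and> \<not> isolated H' w \<and> P H' w"
    if Pv: "P H v" and kf: "is_k_flip V E k H'" for H v H'
  proof -
    obtain p F where pk: "\<forall>v\<in>V. p v < k" and H': "H' = flip_graph V E p F"
      using kf unfolding is_k_flip_def by blast
    have pR: "\<forall>x\<in>R H v. p x < k" using pk XV unfolding R_def by auto
    have kc: "k < card (R H v)" using Pv unfolding P_def by simp
    obtain y1 y2 where y: "y1 \<in> R H v" "y2 \<in> R H v" "y1 \<noteq> y2" "p y1 = p y2"
      using not_inj_pigeon[OF finR kc pR] by blast
    have yX: "y1 \<in> X" "y2 \<in> X" using y unfolding R_def by auto
    have k1: "1 \<le> k" using pk yX(1) XV by fastforce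
    have "k + 1 \<le> card (R H' y1) \<or> k + 1 \<le> card (R H' y2)"
      using key2[OF pk yX y(3,4) big] unfolding H' .
    then obtain y where yy: "y \<in> R H v" "k + 1 \<le> card (R H' y)" using y(1,2) by blast
    have "\<not> R H' y \<subseteq> {y}"
    proof
      assume "R H' y \<subseteq> {y}"
      then have "card (R H' y) \<le> card {y}" by (rule card_mono[rotated]) simp
      then have "card (R H' y) \<le> 1" by simp
      with yy k1 show False by linarith
    qed
    then obtain u where u: "u \<in> R H' y" "u \<noteq> y" by blast
    have "within_dist H' 2 y u" using u(1) unfolding R_def by simp
    then have "\<not> isolated H' y" using dist_nonisolated u(2) by metis
    moreover have "within_dist H 2 v y" using yy(1) unfolding R_def by simp
    moreover have "P H' y" unfolding P_def using yy(2) .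
    ultimately show ?thesis by blast
  qed
  obtain x0 where x0: "x0 \<in> X" using ne by auto
  have "X \<subseteq> R E x0"
  proof
    fix y assume y: "y \<in> X"
    show "y \<in> R E x0"
    proof (cases "y = x0")
      case True then show ?thesis unfolding R_def using y dist0[of E 2 x0] by simp
    next
      case False
      obtain c where c: "c \<in> V" "nbhd V E c \<inter> X = {x0, y}" using wit[OF x0 y False[symmetric]] by auto
      have "E c x0" "E c y" using c unfolding nbhd_def by auto
      then have "within_dist E 2 x0 y" using path2[of E x0 c y] symE by blast
      then show ?thesis unfolding R_def using y by simp
    qed
  qed
  then have "card X \<le> card (R E x0)" using finR card_mono by blast
  then have "P E x0" unfolding P_def using big by simp
  have "\<not> flipper_wins_from V E 2 k E x0"
  proof
    assume "flipper_wins_from V E 2 k E x0"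
    from runner_wins[of P V E k 2, OF stp this] \<open>P E x0\<close> show False by simp
  qed
  then show ?thesis unfolding flipper_wins_def using x0 XV by auto
qed

end

lemma part2:
  assumes g: "finite_graph V E"
  shows "twoVCdim V E \<le> 8 * fw 2 V E + 2"
  unfolding twoVCdim_def
proof (rule Sup_nat_le)
  fix y assume "y \<in> {card X |X. two_shattered V E X}"
  then obtain X where X: "two_shattered V E X" "y = card X" by auto
  have W: "flipper_wins V E 2 (fw 2 V E)" by (rule fw_wins[OF g])
  show "y \<le> 8 * fw 2 V E + 2"
  proof (rule ccontr)
    assume "\<not> ?thesis"
    then have a: "5 * fw 2 V E + 1 \<le> card X" and b: "X \<noteq> {}" using X(2) by auto
    have "\<not> flipper_wins V E 2 (fw 2 V E)"
      by (rule two_ctx.runner2[OF _ a b]) (simp add: two_ctx_def two_ctx_axioms_def gctx_def g X(1))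
    with W show False by contradiction
  qed
qed




definition dir :: "'v \<Rightarrow> 'v \<Rightarrow> 'v \<Rightarrow> int" where
  "dir a b x = (if a = x then 1 else 0) - (if b = x then 1 else 0)"

definition ctr :: "('a \<Rightarrow> 'v) \<Rightarrow> ('a \<Rightarrow> 'v) \<Rightarrow> ('a \<Rightarrow> bool) \<Rightarrow> 'a \<Rightarrow> 'v \<Rightarrow> int" where
  "ctr s t ori z x = (if ori z then dir (s z) (t z) x else dir (t z) (s z) x)"

lemma orient:
  "finite Z \<Longrightarrow> \<exists>ori. \<forall>x. \<bar>\<Sum>z\<in>Z. ctr s t ori z x\<bar> \<le> 1"
proof (induction "card Z" arbitrary: Z s t rule: less_induct)
  case (less Z s t)
  show ?case
  proof (cases "\<exists>z1\<in>Z. \<exists>z2\<in>Z. \<exists>v. z1 \<noteq> z2 \<and> (v = s z1 \<or> v = t z1) \<and> (v = s z2 \<or> v = t z2)")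
    case True
    then obtain z1 z2 v where z: "z1 \<in> Z" "z2 \<in> Z" "z1 \<noteq> z2" "v = s z1 \<or> v = t z1" "v = s z2 \<or> v = t z2"
      by blast
    define u where "u = (if s z1 = v then t z1 else s z1)"
    define w where "w = (if s z2 = v then t z2 else s z2)"
    define Z' where "Z' = Z - {z2}"
    define s' where "s' = s(z1 := u)"
    define t' where "t' = t(z1 := w)"
    have fZ': "finite Z'" using less.prems unfolding Z'_def by auto
    have cZ': "card Z' < card Z" unfolding Z'_def using z(2) less.prems by (meson card_Diff1_less)
    obtain ori' where ori': "\<forall>x. \<bar>\<Sum>z\<in>Z'. ctr s' t' ori' z x\<bar> \<le> 1"
      using less.hyps[OF cZ' fZ'] by blast
    define ori where "ori = ori'(z1 := (if s z1 = v then \<not> ori' z1 else ori' z1),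
                              z2 := (if s z2 = v then ori' z1 else \<not> ori' z1))"
    have oz1: "ori z1 = (if s z1 = v then \<not> ori' z1 else ori' z1)" unfolding ori_def using z(3) by simp
    have oz2: "ori z2 = (if s z2 = v then ori' z1 else \<not> ori' z1)" unfolding ori_def by simp
    have dd: "dir a b x + dir b c x = dir a c x" for a b c :: 'b and x unfolding dir_def by simp
    have k1: "ctr s t ori z1 x = (if ori' z1 then dir u v x else dir v u x)" for x
    proof (cases "s z1 = v")
      case True then show ?thesis unfolding ctr_def oz1 u_def by simp
    next
      case False then have "t z1 = v" using z(4) by auto
      then show ?thesis using False unfolding ctr_def oz1 u_def by simp
    qed
    have k2: "ctr s t ori z2 x = (if ori' z1 then dir v w x else dir w v x)" for x
    proof (cases "s z2 = v")
      case True then show ?thesis unfolding ctr_def oz2 w_def by simp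
    next
      case False then have "t z2 = v" using z(5) by auto
      then show ?thesis using False unfolding ctr_def oz2 w_def by simp
    qed
    have k3: "ctr s' t' ori' z1 x = (if ori' z1 then dir u w x else dir w u x)" for x
      unfolding ctr_def s'_def t'_def by simp
    have key: "ctr s t ori z1 x + ctr s t ori z2 x = ctr s' t' ori' z1 x" for x
      unfolding k1 k2 k3 dir_def by simp
    have eq: "(\<Sum>z\<in>Z. ctr s t ori z x) = (\<Sum>z\<in>Z'. ctr s' t' ori' z x)" for x
    proof -
      have e1: "(\<Sum>z\<in>Z. ctr s t ori z x) = ctr s t ori z2 x + (\<Sum>z\<in>Z'. ctr s t ori z x)"
        unfolding Z'_def using less.prems z(2) by (simp add: sum.remove)
      have e2: "(\<Sum>z\<in>Z'. ctr s t ori z x) = ctr s t ori z1 x + (\<Sum>z\<in>Z'-{z1}. ctr s t ori z x)"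
        using fZ' z unfolding Z'_def by (simp add: sum.remove)
      have e3: "(\<Sum>z\<in>Z'-{z1}. ctr s t ori z x) = (\<Sum>z\<in>Z'-{z1}. ctr s' t' ori' z x)"
      proof (rule sum.cong)
        fix z assume "z \<in> Z' - {z1}"
        then have "z \<noteq> z1" "z \<noteq> z2" unfolding Z'_def by auto
        then have "ori z = ori' z" "s' z = s z" "t' z = t z" unfolding ori_def s'_def t'_def by auto
        then show "ctr s t ori z x = ctr s' t' ori' z x" unfolding ctr_def by simp
      qed simp
      have e4: "(\<Sum>z\<in>Z'. ctr s' t' ori' z x) = ctr s' t' ori' z1 x + (\<Sum>z\<in>Z'-{z1}. ctr s' t' ori' z x)"
        using fZ' z unfolding Z'_def by (simp add: sum.remove)
      show ?thesis unfolding e1 e2 e3 e4 using key[of x] by simp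
    qed
    have "\<forall>x. \<bar>\<Sum>z\<in>Z. ctr s t ori z x\<bar> \<le> 1" using ori' eq by simp
    then show ?thesis by blast
  next
    case False
    have "\<bar>\<Sum>z\<in>Z. ctr s t (\<lambda>_. True) z x\<bar> \<le> 1" for x
    proof (cases "\<exists>z0\<in>Z. x = s z0 \<or> x = t z0")
      case True
      then obtain z0 where z0: "z0 \<in> Z" "x = s z0 \<or> x = t z0" by blast
      have "(\<Sum>z\<in>Z. ctr s t (\<lambda>_. True) z x) = ctr s t (\<lambda>_. True) z0 x + (\<Sum>z\<in>Z-{z0}. ctr s t (\<lambda>_. True) z x)"
        using less.prems z0 by (simp add: sum.remove)
      also have "(\<Sum>z\<in>Z-{z0}. ctr s t (\<lambda>_. True) z x) = 0"
      proof (rule sum.neutral, rule ballI)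
        fix z assume zz: "z \<in> Z - {z0}"
        then have "x \<noteq> s z \<and> x \<noteq> t z" using False z0 by blast
        then show "ctr s t (\<lambda>_. True) z x = 0" unfolding ctr_def dir_def by auto
      qed
      finally show ?thesis unfolding ctr_def dir_def by auto
    next
      case False
      then have "(\<Sum>z\<in>Z. ctr s t (\<lambda>_. True) z x) = 0"
        by (intro sum.neutral) (auto simp: ctr_def dir_def)
      then show ?thesis by simp
    qed
    then show ?thesis by blast
  qed
qed




definition disc :: "'a set \<Rightarrow> ('a \<Rightarrow> nat) \<Rightarrow> 'a set \<Rightarrow> nat \<Rightarrow> int" where
  "disc X q Y c = (\<Sum>x\<in>X. if q x = c then (if x \<in> Y then 1 else -1) else 0)"

lemma swap_delta:
  assumes "finite X" "\<forall>x\<in>X. q x < (k::nat)"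
  shows "(\<Sum>c<k. \<Sum>x\<in>X. if q x = c then f x c else 0) = (\<Sum>x\<in>X. f x (q x))"
proof -
  have "(\<Sum>c<k. \<Sum>x\<in>X. if q x = c then f x c else 0) = (\<Sum>x\<in>X. \<Sum>c<k. if q x = c then f x c else 0)"
    by (rule sum.swap)
  also have "\<dots> = (\<Sum>x\<in>X. f x (q x))"
    by (rule sum.cong) (use assms(2) in auto)
  finally show ?thesis .
qed

lemma mism_bound:
  fixes q :: "'a \<Rightarrow> nat"
  assumes fX: "finite X" and qk: "\<forall>x\<in>X. q x < k"
  shows "int (card X) - (\<Sum>c<k. \<bar>disc X q Y c\<bar>) \<le> 2 * int (card {x\<in>X. (x\<in>Y) \<noteq> P (q x)})"
proof -
  define a where "a c = (\<Sum>x\<in>X. if q x = c then (if x \<in> Y then 1 else 0) else 0 :: int)" for c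
  define b where "b c = (\<Sum>x\<in>X. if q x = c then (if x \<in> Y then 0 else 1) else 0 :: int)" for c
  define m where "m c = (\<Sum>x\<in>X. if q x = c then (if (x\<in>Y) \<noteq> P c then 1 else 0) else 0 :: int)" for c
  define n where "n c = (\<Sum>x\<in>X. if q x = c then 1 else 0 :: int)" for c
  have da: "disc X q Y c = a c - b c" for c
    unfolding disc_def a_def b_def by (subst sum_subtractf[symmetric]) (rule sum.cong, auto)
  have na: "n c = a c + b c" for c
    unfolding n_def a_def b_def by (subst sum.distrib[symmetric]) (rule sum.cong, auto)
  have ma: "m c = (if P c then b c else a c)" for c
    unfolding m_def a_def b_def by (cases "P c") (auto intro!: sum.cong)
  have a0: "a c \<ge> 0" "b c \<ge> 0" for c unfolding a_def b_def by (auto intro!: sum_nonneg)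
  have each: "n c - \<bar>disc X q Y c\<bar> \<le> 2 * m c" for c
    unfolding na da ma using a0[of c] by auto
  have sn: "(\<Sum>c<k. n c) = int (card X)"
    unfolding n_def using swap_delta[OF fX qk, of "\<lambda>x c. 1::int"] by simp
  have sm: "(\<Sum>c<k. m c) = int (card {x\<in>X. (x\<in>Y) \<noteq> P (q x)})"
  proof -
    have "(\<Sum>c<k. m c) = (\<Sum>x\<in>X. if (x\<in>Y) \<noteq> P (q x) then 1 else 0 :: int)"
      unfolding m_def using swap_delta[OF fX qk, of "\<lambda>x c. if (x\<in>Y) \<noteq> P c then 1 else 0::int"] by simp
    also have "\<dots> = int (card {x\<in>X. (x\<in>Y) \<noteq> P (q x)})"
      using fX by (simp add: sum.inter_filter[symmetric])
    finally show ?thesis .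
  qed
  have "(\<Sum>c<k. n c - \<bar>disc X q Y c\<bar>) \<le> (\<Sum>c<k. 2 * m c)" by (rule sum_mono) (rule each)
  then show ?thesis unfolding sum_subtractf sum_distrib_left[symmetric] sn sm .
qed




lemma one_side:
  fixes q :: "'a \<Rightarrow> nat"
  assumes fX: "finite X" and x1: "x1 \<in> X" and x2: "x2 \<in> X" and ne: "x1 \<noteq> x2"
    and qk: "\<forall>x\<in>X. q x < k" and big: "8 * k + 1 \<le> card X"
    and bal: "\<forall>c. \<bar>\<Sum>z\<in>X - {x1, x2}. if q z = c then (if ori z then 1 else -1) else 0 :: int\<bar> \<le> 1"
  defines "Y \<equiv> {z\<in>X - {x1,x2}. ori z} \<union> {x1}"
  shows "k + 3 \<le> card {x\<in>X. (x\<in>Y) \<noteq> P (q x)}"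
proof -
  define Z where "Z = X - {x1, x2}"
  have XZ: "X = insert x1 (insert x2 Z)" unfolding Z_def using x1 x2 by auto
  have fZ: "finite Z" unfolding Z_def using fX by auto
  have dq: "disc X q Y c = (\<Sum>z\<in>Z. if q z = c then (if ori z then 1 else -1) else 0)
      + ((if q x1 = c then 1 else 0) - (if q x2 = c then 1 else 0))" for c
  proof -
    have "disc X q Y c = (\<Sum>x\<in>insert x1 (insert x2 Z). if q x = c then (if x \<in> Y then 1 else -1) else 0)"
      unfolding disc_def XZ ..
    also have "\<dots> = (if q x1 = c then 1 else 0) + ((if q x2 = c then -1 else 0) +
        (\<Sum>x\<in>Z. if q x = c then (if x \<in> Y then 1 else -1) else 0))"
      using fZ ne unfolding Z_def Y_def by simp
    also have "(\<Sum>x\<in>Z. if q x = c then (if x \<in> Y then 1 else -1) else 0) =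
        (\<Sum>z\<in>Z. if q z = c then (if ori z then 1 else -1) else 0 :: int)"
      by (rule sum.cong) (auto simp: Y_def Z_def)
    finally show ?thesis by simp
  qed
  define e where "e c = \<bar>(if q x1 = c then 1 else 0) - (if q x2 = c then 1 else 0 :: int)\<bar>" for c
  have dc: "\<bar>disc X q Y c\<bar> \<le> 1 + e c" for c
    unfolding dq e_def using bal[rule_format, of c] unfolding Z_def by linarith
  have se: "(\<Sum>c<k. e c) \<le> (if q x1 = q x2 then 0 else 2)"
  proof (cases "q x1 = q x2")
    case True then show ?thesis unfolding e_def by simp
  next
    case False
    have "(\<Sum>c<k. e c) \<le> (\<Sum>c<k. (if q x1 = c then 1 else 0) + (if q x2 = c then 1 else 0 :: int))"
      by (rule sum_mono) (auto simp: e_def)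
    also have "\<dots> \<le> 2" by (simp add: sum.distrib)
    finally show ?thesis using False by simp
  qed
  have sd: "(\<Sum>c<k. \<bar>disc X q Y c\<bar>) \<le> int k + (if q x1 = q x2 then 0 else 2)"
  proof -
    have "(\<Sum>c<k. \<bar>disc X q Y c\<bar>) \<le> (\<Sum>c<k. 1 + e c)" by (rule sum_mono) (rule dc)
    also have "\<dots> = int k + (\<Sum>c<k. e c)" by (simp add: sum.distrib)
    finally show ?thesis using se by linarith
  qed
  have qq: "q x1 < k" "q x2 < k" using qk x1 x2 by auto
  have k2: "q x1 \<noteq> q x2 \<Longrightarrow> 2 \<le> k" using qq by arith
  have k1: "1 \<le> k" using qq by arith
  have "int (card X) - (\<Sum>c<k. \<bar>disc X q Y c\<bar>) \<le> 2 * int (card {x\<in>X. (x\<in>Y) \<noteq> P (q x)})"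
    by (rule mism_bound[OF fX qk])
  moreover have "(\<Sum>c<k. \<bar>disc X q Y c\<bar>) \<le> int k + 2" using sd by (auto split: if_splits)
  moreover have "q x1 = q x2 \<Longrightarrow> (\<Sum>c<k. \<bar>disc X q Y c\<bar>) \<le> int k" using sd by auto
  ultimately show ?thesis using big k1 k2 by (cases "q x1 = q x2") linarith+
qed

lemma balance:
  fixes q1 q2 :: "'a \<Rightarrow> nat"
  assumes fX: "finite X" and x1: "x1 \<in> X" and x2: "x2 \<in> X" and ne: "x1 \<noteq> x2"
    and q1k: "\<forall>x\<in>X. q1 x < k" and q2k: "\<forall>x\<in>X. q2 x < k" and big: "8 * k + 1 \<le> card X"
  shows "\<exists>Y\<subseteq>X. x1 \<in> Y \<and> x2 \<notin> Y \<and> (\<forall>P. k + 3 \<le> card {x\<in>X. (x\<in>Y) \<noteq> P (q1 x)})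
     \<and> (\<forall>P. k + 3 \<le> card {x\<in>X. (x\<in>Y) \<noteq> P (q2 x)})"
proof -
  define Z where "Z = X - {x1, x2}"
  define s :: "'a \<Rightarrow> nat + nat" where "s z = Inl (q1 z)" for z
  define t :: "'a \<Rightarrow> nat + nat" where "t z = Inr (q2 z)" for z
  have fZ: "finite Z" unfolding Z_def using fX by auto
  obtain ori where ori: "\<forall>x. \<bar>\<Sum>z\<in>Z. ctr s t ori z x\<bar> \<le> 1" using orient[OF fZ] by blast
  have b1: "\<forall>c. \<bar>\<Sum>z\<in>X - {x1, x2}. if q1 z = c then (if ori z then 1 else -1) else 0 :: int\<bar> \<le> 1"
  proof
    fix c
    have "(\<Sum>z\<in>Z. ctr s t ori z (Inl c)) = (\<Sum>z\<in>Z. if q1 z = c then (if ori z then 1 else -1) else 0)"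
      by (rule sum.cong) (auto simp: ctr_def dir_def s_def t_def)
    then show "\<bar>\<Sum>z\<in>X - {x1, x2}. if q1 z = c then (if ori z then 1 else -1) else 0 :: int\<bar> \<le> 1"
      using ori[rule_format, of "Inl c"] unfolding Z_def by simp
  qed
  have b2: "\<forall>c. \<bar>\<Sum>z\<in>X - {x1, x2}. if q2 z = c then (if ori z then 1 else -1) else 0 :: int\<bar> \<le> 1"
  proof
    fix c
    have "(\<Sum>z\<in>Z. ctr s t ori z (Inr c)) = - (\<Sum>z\<in>Z. if q2 z = c then (if ori z then 1 else -1) else 0)"
      unfolding sum_negf[symmetric] by (rule sum.cong) (auto simp: ctr_def dir_def s_def t_def)
    then show "\<bar>\<Sum>z\<in>X - {x1, x2}. if q2 z = c then (if ori z then 1 else -1) else 0 :: int\<bar> \<le> 1"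
      using ori[rule_format, of "Inr c"] unfolding Z_def by simp
  qed
  define Y where "Y = {z\<in>X - {x1,x2}. ori z} \<union> {x1}"
  have "Y \<subseteq> X" "x1 \<in> Y" "x2 \<notin> Y" unfolding Y_def using x1 ne by auto
  moreover have "\<forall>P. k + 3 \<le> card {x\<in>X. (x\<in>Y) \<noteq> P (q1 x)}"
    using one_side[OF fX x1 x2 ne q1k big b1] unfolding Y_def by blast
  moreover have "\<forall>P. k + 3 \<le> card {x\<in>X. (x\<in>Y) \<noteq> P (q2 x)}"
    using one_side[OF fX x1 x2 ne q2k big b2] unfolding Y_def by blast
  ultimately show ?thesis by blast
qed




definition flipz :: "'a \<Rightarrow> 'a set \<Rightarrow> 'a set" where
  "flipz z Y = (if z \<in> Y then Y - {z} else insert z Y)"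

lemma flipz_mem: "x \<noteq> z \<Longrightarrow> x \<in> flipz z Y \<longleftrightarrow> x \<in> Y"
  unfolding flipz_def by auto

lemma flipz_ne: "flipz z Y \<noteq> Y" unfolding flipz_def by auto

lemma flipz_ne2: "z \<noteq> z' \<Longrightarrow> flipz z Y \<noteq> flipz z' Y"
  unfolding flipz_def by auto

lemma flipz_card:
  assumes "finite X"
  shows "card {x\<in>X. (x\<in>Y) \<noteq> Q x} \<le> card {x\<in>X. (x\<in>flipz z Y) \<noteq> Q x} + 1"
proof -
  have "{x\<in>X. (x\<in>Y) \<noteq> Q x} \<subseteq> insert z {x\<in>X. (x\<in>flipz z Y) \<noteq> Q x}"
  proof
    fix x assume x: "x \<in> {x\<in>X. (x\<in>Y) \<noteq> Q x}"
    show "x \<in> insert z {x\<in>X. (x\<in>flipz z Y) \<noteq> Q x}"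
    proof (cases "x = z")
      case False then show ?thesis using x flipz_mem[OF False, of Y] by simp
    qed simp
  qed
  then have "card {x\<in>X. (x\<in>Y) \<noteq> Q x} \<le> card (insert z {x\<in>X. (x\<in>flipz z Y) \<noteq> Q x})"
    by (rule card_mono[rotated]) (use assms in auto)
  also have "\<dots> \<le> card {x\<in>X. (x\<in>flipz z Y) \<noteq> Q x} + 1"
    using assms by (simp add: card_insert_if)
  finally show ?thesis .
qed

locale vc_ctx = gctx +
  fixes X :: "'a set" and k :: nat
  assumes sh: "shattered V E X"
begin

lemma XV: "X \<subseteq> V" using sh unfolding shattered_def by auto
lemma finX: "finite X" using XV finV finite_subset by auto

lemma wit1: "Y \<subseteq> X \<Longrightarrow> \<exists>c\<in>V. nbhd V E c \<inter> X = Y"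
proof -
  assume "Y \<subseteq> X"
  then have "Y \<in> {nbhd V E v \<inter> X | v. v \<in> V}" using sh unfolding shattered_def by auto
  then show ?thesis by auto
qed

lemma nb_iff: "nbhd V E c \<inter> X = Y \<Longrightarrow> x \<in> X \<Longrightarrow> E c x \<longleftrightarrow> x \<in> Y"
  unfolding nbhd_def using XV by auto

definition NX :: "('a \<Rightarrow> 'a \<Rightarrow> bool) \<Rightarrow> 'a \<Rightarrow> 'a set" where
  "NX H v = {u\<in>X. H v u}"

lemma finNX: "finite (NX H v)" unfolding NX_def using finX by auto

definition TW where "TW H v = (k + 1 \<le> card (NX H v))"
definition TX where "TX H x = (\<forall>H''. is_k_flip V E k H'' \<longrightarrow> (\<exists>w. H x w \<and> k + 1 \<le> card (NX H'' w)))"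

lemma far:
  assumes w: "w \<in> V" "nbhd V E w \<inter> X = Y"
  shows "card {x\<in>X. (x\<in>Y) \<noteq> F (p w) (p x)} \<le> card (NX (flip_graph V E p F) w) + 1"
proof -
  have "{x\<in>X. (x\<in>Y) \<noteq> F (p w) (p x)} \<subseteq> insert w (NX (flip_graph V E p F) w)"
  proof
    fix x assume x: "x \<in> {x\<in>X. (x\<in>Y) \<noteq> F (p w) (p x)}"
    show "x \<in> insert w (NX (flip_graph V E p F) w)"
    proof (cases "x = w")
      case False
      have "E w x \<longleftrightarrow> x \<in> Y" using nb_iff[OF w(2)] x by auto
      then show ?thesis using x False w(1) XV unfolding NX_def flip_graph_def by auto
    qed simp
  qed
  then have "card {x\<in>X. (x\<in>Y) \<noteq> F (p w) (p x)} \<le> card (insert w (NX (flip_graph V E p F) w))"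
    by (rule card_mono[rotated]) (use finNX in auto)
  also have "\<dots> \<le> card (NX (flip_graph V E p F) w) + 1"
    by (simp add: card_insert_if finNX)
  finally show ?thesis .
qed

lemma key1:
  fixes p :: "'a \<Rightarrow> nat" and F
  defines "H' \<equiv> flip_graph V E p F"
  assumes x1: "x1 \<in> X" and x2: "x2 \<in> X" and ne: "x1 \<noteq> x2" and pe: "p x1 = p x2"
  assumes big: "8 * k + 1 \<le> card X"
  shows "TX H' x1 \<or> TX H' x2"
proof (rule ccontr)
  assume "\<not> ?thesis"
  then have nt: "\<not> TX H' x1" "\<not> TX H' x2" by auto
  obtain H1 where h1: "is_k_flip V E k H1" "\<forall>w. H' x1 w \<longrightarrow> \<not> k + 1 \<le> card (NX H1 w)"
    using nt(1) unfolding TX_def by blast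
  obtain H2 where h2: "is_k_flip V E k H2" "\<forall>w. H' x2 w \<longrightarrow> \<not> k + 1 \<le> card (NX H2 w)"
    using nt(2) unfolding TX_def by blast
  obtain p1 F1 where p1: "\<forall>v\<in>V. p1 v < k" "H1 = flip_graph V E p1 F1" using h1(1) unfolding is_k_flip_def by blast
  obtain p2 F2 where p2: "\<forall>v\<in>V. p2 v < k" "H2 = flip_graph V E p2 F2" using h2(1) unfolding is_k_flip_def by blast
  have q1: "\<forall>x\<in>X. p1 x < k" and q2: "\<forall>x\<in>X. p2 x < k" using p1(1) p2(1) XV by auto
  obtain Y where Y: "Y \<subseteq> X" "x1 \<in> Y" "x2 \<notin> Y" "\<forall>P. k + 3 \<le> card {x\<in>X. (x\<in>Y) \<noteq> P (p1 x)}"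
      "\<forall>P. k + 3 \<le> card {x\<in>X. (x\<in>Y) \<noteq> P (p2 x)}"
    using balance[OF finX x1 x2 ne q1 q2 big] by blast
  define S where "S = X - {x1, x2}"
  have cS: "card S = card X - 2" unfolding S_def using x1 x2 ne finX by (simp add: card_Diff_subset)
  have "p1 x1 < k" using q1 x1 by blast
  then have k1: "1 \<le> k" by simp
  have "S \<noteq> {}" using cS big k1 by auto
  then obtain z where z: "z \<in> S" by auto
  have "\<not> S \<subseteq> {z}"
  proof
    assume "S \<subseteq> {z}"
    then have "card S \<le> card {z}" by (rule card_mono[rotated]) simp
    with cS big k1 show False by simp
  qed
  then obtain z' where z': "z' \<in> S" "z' \<noteq> z" by auto
  define G where "G T = (T \<subseteq> X \<and> x1 \<in> T \<and> x2 \<notin> T \<and> (\<forall>P. k + 2 \<le> card {x\<in>X. (x\<in>T) \<noteq> P (p1 x)})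
      \<and> (\<forall>P. k + 2 \<le> card {x\<in>X. (x\<in>T) \<noteq> P (p2 x)}))" for T
  have GY: "G Y"
  proof -
    have "k + 2 \<le> card {x\<in>X. (x\<in>Y) \<noteq> P (p1 x)}" for P
    proof -
      have "k + 3 \<le> card {x\<in>X. (x\<in>Y) \<noteq> P (p1 x)}" using Y(4) by blast
      then show ?thesis by linarith
    qed
    moreover have "k + 2 \<le> card {x\<in>X. (x\<in>Y) \<noteq> P (p2 x)}" for P
    proof -
      have "k + 3 \<le> card {x\<in>X. (x\<in>Y) \<noteq> P (p2 x)}" using Y(5) by blast
      then show ?thesis by linarith
    qed
    ultimately show ?thesis unfolding G_def using Y(1,2,3) by blast
  qed
  have Gf: "G (flipz u Y)" if u: "u \<in> S" for u
  proof -
    have u': "u \<in> X" "u \<noteq> x1" "u \<noteq> x2" using u unfolding S_def by auto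
    have "flipz u Y \<subseteq> X" using Y(1) u' unfolding flipz_def by auto
    moreover have "x1 \<in> flipz u Y" "x2 \<notin> flipz u Y" using flipz_mem[of x1 u Y] flipz_mem[of x2 u Y] u' Y by auto
    moreover have "k + 2 \<le> card {x\<in>X. (x\<in>flipz u Y) \<noteq> P (p1 x)}" for P
    proof -
      have "k + 3 \<le> card {x\<in>X. (x\<in>Y) \<noteq> P (p1 x)}" using Y(4) by blast
      then show ?thesis using flipz_card[OF finX, of Y "\<lambda>x. P (p1 x)" u] by linarith
    qed
    moreover have "k + 2 \<le> card {x\<in>X. (x\<in>flipz u Y) \<noteq> P (p2 x)}" for P
    proof -
      have "k + 3 \<le> card {x\<in>X. (x\<in>Y) \<noteq> P (p2 x)}" using Y(5) by blast
      then show ?thesis using flipz_card[OF finX, of Y "\<lambda>x. P (p2 x)" u] by linarith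
    qed
    ultimately show ?thesis unfolding G_def by blast
  qed
  define N1 where "N1 = nbhd V E x1 \<inter> X"
  define N2 where "N2 = nbhd V E x2 \<inter> X"
  have "\<exists>T. G T \<and> T \<noteq> N1 \<and> T \<noteq> N2"
  proof -
    have d: "Y \<noteq> flipz z Y" "Y \<noteq> flipz z' Y" "flipz z Y \<noteq> flipz z' Y"
      using flipz_ne flipz_ne2 z'(2) by metis+
    show ?thesis using GY Gf[OF z] Gf[OF z'(1)] d by blast
  qed
  then obtain T where T: "G T" "T \<noteq> N1" "T \<noteq> N2" by blast
  then have TX': "T \<subseteq> X" "x1 \<in> T" "x2 \<notin> T" unfolding G_def by auto
  obtain w where w: "w \<in> V" "nbhd V E w \<inter> X = T" using wit1[OF TX'(1)] by blast
  have wx: "w \<noteq> x1" "w \<noteq> x2" using w T(2,3) unfolding N1_def N2_def by auto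
  have Ex1: "E x1 w" using nb_iff[OF w(2) x1] TX'(2) symE by auto
  have Ex2: "\<not> E x2 w" using nb_iff[OF w(2) x2] TX'(3) symE by auto
  have xV: "x1 \<in> V" "x2 \<in> V" using x1 x2 XV by auto
  have fa1: "k + 1 \<le> card (NX H1 w)"
  proof -
    have "k + 2 \<le> card {x\<in>X. (x\<in>T) \<noteq> F1 (p1 w) (p1 x)}" using T(1) unfolding G_def by blast
    then show ?thesis using far[OF w, of F1 p1] unfolding p1(2) by linarith
  qed
  have fa2: "k + 1 \<le> card (NX H2 w)"
  proof -
    have "k + 2 \<le> card {x\<in>X. (x\<in>T) \<noteq> F2 (p2 w) (p2 x)}" using T(1) unfolding G_def by blast
    then show ?thesis using far[OF w, of F2 p2] unfolding p2(2) by linarith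
  qed
  show False
  proof (cases "F (p x1) (p w)")
    case True
    then have "H' x2 w" unfolding H'_def flip_graph_def using xV w(1) wx Ex2 pe by auto
    then show False using h2(2) fa2 by blast
  next
    case False
    then have "H' x1 w" unfolding H'_def flip_graph_def using xV w(1) wx Ex1 by auto
    then show False using h1(2) fa1 by blast
  qed
qed

lemma runner1:
  assumes big: "8 * k + 1 \<le> card X"
  shows "\<not> flipper_wins V E 1 k"
proof -
  define P where "P H v = (TW H v \<or> TX H v)" for H v
  have stp: "\<exists>w. within_dist H 1 v w \<and> \<not> isolated H' w \<and> P H' w"
    if Pv: "P H v" and kf: "is_k_flip V E k H'" for H v H'
  proof (cases "TW H v")
    case True
    obtain p F where pk: "\<forall>v\<in>V. p v < k" and H': "H' = flip_graph V E p F"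
      using kf unfolding is_k_flip_def by blast
    have pR: "\<forall>x\<in>NX H v. p x < k" using pk XV unfolding NX_def by auto
    have kc: "k < card (NX H v)" using True unfolding TW_def by simp
    obtain x1 x2 where y: "x1 \<in> NX H v" "x2 \<in> NX H v" "x1 \<noteq> x2" "p x1 = p x2"
      using not_inj_pigeon[OF finNX kc pR] by blast
    have yX: "x1 \<in> X" "x2 \<in> X" using y unfolding NX_def by auto
    have "TX H' x1 \<or> TX H' x2" using key1[OF yX y(3,4) big] unfolding H' .
    then obtain y where yy: "y \<in> NX H v" "TX H' y" using y(1,2) by blast
    obtain u where "H' y u" using yy(2) kf unfolding TX_def by blast
    then have "\<not> isolated H' y" unfolding isolated_def by blast
    moreover have "within_dist H 1 v y" using yy(1) dist1[of H v y 1] unfolding NX_def by simp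
    moreover have "P H' y" unfolding P_def using yy(2) by simp
    ultimately show ?thesis by blast
  next
    case False
    then have "TX H v" using Pv unfolding P_def by simp
    then obtain w where w: "H v w" "k + 1 \<le> card (NX H' w)" using kf unfolding TX_def by blast
    then have "NX H' w \<noteq> {}" by auto
    then have "\<not> isolated H' w" unfolding isolated_def NX_def by blast
    moreover have "within_dist H 1 v w" using w(1) dist1[of H v w 1] by simp
    moreover have "P H' w" unfolding P_def TW_def using w(2) by simp
    ultimately show ?thesis by blast
  qed
  obtain v0 where v0: "v0 \<in> V" "nbhd V E v0 \<inter> X = X" using wit1[of X] by blast
  have "NX E v0 = X" unfolding NX_def using nb_iff[OF v0(2)] by auto
  then have "P E v0" unfolding P_def TW_def using big by simp
  have "\<not> flipper_wins_from V E 1 k E v0"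
  proof
    assume "flipper_wins_from V E 1 k E v0"
    from runner_wins[of P V E k 1, OF stp this] \<open>P E v0\<close> show False by simp
  qed
  then show ?thesis unfolding flipper_wins_def using v0 by auto
qed

end

lemma part1:
  assumes g: "finite_graph V E"
  shows "VCdim V E \<le> 8 * fw 1 V E"
  unfolding VCdim_def
proof (rule Sup_nat_le)
  fix y assume "y \<in> {card X |X. shattered V E X}"
  then obtain X where X: "shattered V E X" "y = card X" by auto
  have W: "flipper_wins V E 1 (fw 1 V E)" by (rule fw_wins[OF g])
  show "y \<le> 8 * fw 1 V E"
  proof (rule ccontr)
    assume "\<not> ?thesis"
    then have a: "8 * fw 1 V E + 1 \<le> card X" using X(2) by auto
    have "\<not> flipper_wins V E 1 (fw 1 V E)"
      by (rule vc_ctx.runner1[OF _ a]) (simp add: vc_ctx_def vc_ctx_axioms_def gctx_def g X(1))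
    with W show False by contradiction
  qed
qed

theorem mainTheorem6:
  fixes V :: "'a set" and E :: "'a \<Rightarrow> 'a \<Rightarrow> bool"
  assumes "finite_graph V E"
  shows "VCdim V E \<le> 8 * fw 1 V E \<and> twoVCdim V E \<le> 8 * fw 2 V E + 2"
  using part1[OF assms] part2[OF assms] by simp


end
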